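(* Let $C_4=\langle y\mid y^4=e\rangle$ and $\Delta=\{x,y,z\}$ with $x=y^2$, $z=y^3$ (so $C_\Delta(C_4)$ is the complete graph on four vertices). Then $W=W_xU_x+W_yU_y+W_zU_z$ is a homogeneous scalar quantum walk on $C_\Delta(C_4)$ whenever, for some real $\phi$ and integer $q$, $W_x=\cos\phi$, $W_y=\frac{1+i(-1)^q}{2}\sin\phi$, $W_z=-\frac{1-i(-1)^q}{2}\sin\phi$ and these values are nonzero; in particular the complete graph on four vertices admits such a walk.
   Context: The Cayley graph $C_\Delta(\Gamma)$ has vertex set $\Gamma$ and directed edges $(g,g\delta)$, $g\in\Gamma,\delta\in\Delta$. Let $\ell^2(\Gamma)$ have orthonormal basis $\{|g\rangle\}_{g\in\Gamma}$ and for $\delta\in\Gamma$ let $U_\delta|g\rangle=|g\delta\rangle$. A homogeneous scalar quantum walk on $C_\Delta(\Gamma)$ is a unitary operator $W=\sum_{\delta\in\Delta}W_\delta U_\delta$ with all complex coefficients $W_\delta$ nonzero. *)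

theory Defs
  imports "HOL-Analysis.Analysis" "HOL-Library.Numeral_Type"
begin

text \<open>Finite group \<Gamma> written additively (g\<delta> is g + \<delta>); \<ell>^2(\<Gamma>) is complex ^ 'g,
  and operators on it are matrices complex ^ 'g ^ 'g, with M $ h $ g = <h|M|g>.\<close>

definition shift_op :: "'g::{finite,group_add} \<Rightarrow> complex ^ 'g::{finite,group_add} ^ 'g::{finite,group_add}" where
  "shift_op \<delta> = (\<chi> h g. if h = g + \<delta> then 1 else 0)"

definition adjoint_mat :: "complex ^ 'n ^ 'm \<Rightarrow> complex ^ 'm ^ 'n" where
  "adjoint_mat M = (\<chi> i j. cnj (M $ j $ i))"

definition unitary_mat :: "complex ^ 'n ^ 'n \<Rightarrow> bool" where
  "unitary_mat M \<longleftrightarrow> M ** adjoint_mat M = mat 1 \<and> adjoint_mat M ** M = mat 1"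

definition walk_op :: "'g::{finite,group_add} set \<Rightarrow> ('g \<Rightarrow> complex) \<Rightarrow> complex ^ 'g::{finite,group_add} ^ 'g::{finite,group_add}" where
  "walk_op \<Delta> c = (\<chi> h g. \<Sum>\<delta>\<in>\<Delta>. c \<delta> * shift_op \<delta> $ h $ g)"

definition homogeneous_scalar_qwalk :: "'g::{finite,group_add} set \<Rightarrow> ('g \<Rightarrow> complex) \<Rightarrow> bool" where
  "homogeneous_scalar_qwalk \<Delta> c \<longleftrightarrow> (\<forall>\<delta>\<in>\<Delta>. c \<delta> \<noteq> 0) \<and> unitary_mat (walk_op \<Delta> c)"

end

theory Submission imports Defs begin
lemma U4: "(UNIV::4 set) = {0,1,2,3}"
proof -
  have "card {0::4,1,2,3} = 4" by simp
  moreover have "card (UNIV::4 set) = 4" by simp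
  ultimately show ?thesis using card_subset_eq[of "UNIV::4 set" "{0,1,2,3}"] by auto
qed
lemma all4: "(\<forall>x::4. P x) \<longleftrightarrow> P 0 \<and> P 1 \<and> P 2 \<and> P 3"
  by (metis U4 insertE singletonD UNIV_I)
lemma entry:
  fixes f :: "4 \<Rightarrow> complex"
  assumes "f 0 = 0"
  shows "walk_op {2::4,1,3} f $ h $ g = f (h - g)"
proof -
  have iff: "\<And>d::4. (h = g + d) = (h - g = d)" by (auto simp: algebra_simps)
  have "walk_op {2::4,1,3} f $ h $ g = (\<Sum>d\<in>{2::4,1,3}. f d * (if h = g + d then 1 else 0))"
    by (simp add: walk_op_def shift_op_def)
  also have "\<dots> = f 2 * (if h - g = 2 then 1 else 0) + f 1 * (if h - g = 1 then 1 else 0) + f 3 * (if h - g = 3 then 1 else 0)"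
    by (simp only: iff) simp
  also have "\<dots> = f (h - g)"
    using all4[of "\<lambda>d. d = h - g \<longrightarrow> f 2 * (if d = 2 then 1 else 0) + f 1 * (if d = 1 then 1 else 0) + f 3 * (if d = 3 then 1 else 0) = f d"] assms
    by simp
  finally show ?thesis .
qed
lemma unit:
  fixes a b c :: complex
  defines "f \<equiv> (\<lambda>d::4. if d = 2 then a else if d = 1 then b else if d = 3 then c else 0)"
  assumes N: "a*cnj a + b*cnj b + c*cnj c = 1" and A: "a*cnj c + b*cnj a = 0" and B: "c*cnj b + b*cnj c = 0"
  shows "unitary_mat (walk_op {2::4,1,3} f)"
proof -
  have A': "cnj a * c + cnj b * a = 0" using arg_cong[OF A, of cnj] by (simp add: mult.commute)
  have B': "cnj c * b + cnj b * c = 0" using arg_cong[OF B, of cnj] by (simp add: mult.commute)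
  have f0: "f 0 = 0" by (simp add: f_def)
  have P: "(walk_op {2::4,1,3} f ** adjoint_mat (walk_op {2::4,1,3} f)) $ h $ g = (\<Sum>k\<in>{0,1,2,3}. f (h - k) * cnj (f (g - k)))" for h g
    by (simp add: matrix_matrix_mult_def adjoint_mat_def entry[of f, OF f0] U4[symmetric])
  have Q: "(adjoint_mat (walk_op {2::4,1,3} f) ** walk_op {2::4,1,3} f) $ h $ g = (\<Sum>k\<in>{0,1,2,3}. cnj (f (k - h)) * f (k - g))" for h g
    by (simp add: matrix_matrix_mult_def adjoint_mat_def entry[of f, OF f0] U4[symmetric])
  show ?thesis unfolding unitary_mat_def
    apply (simp only: vec_eq_iff all4 P Q)
    apply (simp add: f_def mat_def)
    using N A B A' B' by (simp add: algebra_simps)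
qed
lemma vals:
  fixes \<phi> :: real and s :: complex
  assumes "s = 1 \<or> s = -1"
  defines "a \<equiv> complex_of_real (cos \<phi>)"
    and "b \<equiv> (1 + \<i> * s) / 2 * complex_of_real (sin \<phi>)"
    and "c \<equiv> - ((1 - \<i> * s) / 2) * complex_of_real (sin \<phi>)"
  shows "a*cnj a + b*cnj b + c*cnj c = 1" "a*cnj c + b*cnj a = 0" "c*cnj b + b*cnj c = 0"
  using assms(1) 
  by (auto simp: a_def b_def c_def complex_eq_iff algebra_simps power2_eq_square[symmetric])
theorem mainTheorem9:
  fixes \<phi> :: real and q :: int
  defines "Wx \<equiv> complex_of_real (cos \<phi>)"
    and "Wy \<equiv> (1 + \<i> * (-1) ^ nat \<bar>q\<bar>) / 2 * complex_of_real (sin \<phi>)"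
    and "Wz \<equiv> - ((1 - \<i> * (-1) ^ nat \<bar>q\<bar>) / 2) * complex_of_real (sin \<phi>)"
  assumes "Wx \<noteq> 0" and "Wy \<noteq> 0" and "Wz \<noteq> 0"
  shows "homogeneous_scalar_qwalk {2::4, 1, 3}
           (\<lambda>d. if d = 2 then Wx else if d = 1 then Wy else if d = 3 then Wz else 0)
       \<and> (\<exists>c. homogeneous_scalar_qwalk {2::4, 1, 3} c)"
proof -
  have s: "(-1::complex) ^ nat \<bar>q\<bar> = 1 \<or> (-1::complex) ^ nat \<bar>q\<bar> = -1"
    by (cases "even (nat \<bar>q\<bar>)") auto
  note V = vals[OF s, of \<phi>, folded Wx_def Wy_def Wz_def]
  have H: "homogeneous_scalar_qwalk {2::4, 1, 3}
           (\<lambda>d. if d = 2 then Wx else if d = 1 then Wy else if d = 3 then Wz else 0)"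
    unfolding homogeneous_scalar_qwalk_def
    using unit[OF V] assms(4-6) by simp
  then show ?thesis by blast
qed
end
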